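(* Suppose $(\varepsilon,\beta,\gamma;(12))\in\mathrm{Par}(n)$. Fix an integer $d>1$, and let $r$ be the number of cycles of $\beta$ of length $d$; suppose $r$ is odd. Let $\Gamma$ be the set of all cycles $C$ of $\gamma$ (including fixed points as cycles of length $1$) satisfying all of: <ul> <li>(i) $o(C)$ is an odd divisor of $d$;</li> <li>(ii) $\beta$ has no cycle $C'$ with $1<o(C')<d$ and $\operatorname{lcm}(o(C),o(C'))=d$;</li> <li>(iii) if the number of fixed points of $\beta$ is odd, then $o(C)<d$.</li> </ul> Then $\Gamma=\emptyset$ if $d$ is even, and $|\Gamma|\le r$ if $d$ is odd.
   Context: A Latin square of order $n$ is an $n\times n$ array with rows, columns and symbols indexed by $[n]$, each symbol occurring once in each row and each column, with triple set $O(L)$. Permutations act on the right; $\varepsilon$ is the identity. $o(C)$ is the length of a cycle $C$. A paratopism $(\alpha,\beta,\gamma;(12))$ maps $L$ to $L^\sigma$ with triple set $\{(y\beta,x\alpha,z\gamma):(x,y,z)\in O(L)\}$; it is an autoparatopism of $L$ if $L^\sigma=L$. $\mathrm{Par}(n)$ is the set of paratopisms that are autoparatopisms of at least one Latin square of order $n$. *)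

theory Defs
  imports "HOL-Combinatorics.Permutations" "HOL-Combinatorics.Orbits"
begin

text \<open>Rows, columns and symbols are indexed by [n] = {0..<n}.
  A Latin square of order n is given by its triple set O(L).\<close>

definition latin_square :: "nat \<Rightarrow> (nat \<times> nat \<times> nat) set \<Rightarrow> bool" where
  "latin_square n T \<longleftrightarrow>
     T \<subseteq> {..<n} \<times> {..<n} \<times> {..<n} \<and>
     (\<forall>x<n. \<forall>y<n. \<exists>!z. (x, y, z) \<in> T) \<and>
     (\<forall>x<n. \<forall>z<n. \<exists>!y. (x, y, z) \<in> T) \<and>
     (\<forall>y<n. \<forall>z<n. \<exists>!x. (x, y, z) \<in> T)"

text \<open>Image of a triple set under the paratopism (alpha, beta, gamma; (12)).
  Permutations act on the right, so x alpha is written alpha x.\<close>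

definition paratopism12_image ::
  "(nat \<Rightarrow> nat) \<Rightarrow> (nat \<Rightarrow> nat) \<Rightarrow> (nat \<Rightarrow> nat) \<Rightarrow> (nat \<times> nat \<times> nat) set \<Rightarrow> (nat \<times> nat \<times> nat) set" where
  "paratopism12_image \<alpha> \<beta> \<gamma> T = {(\<beta> y, \<alpha> x, \<gamma> z) | x y z. (x, y, z) \<in> T}"

definition in_Par12 :: "nat \<Rightarrow> (nat \<Rightarrow> nat) \<Rightarrow> (nat \<Rightarrow> nat) \<Rightarrow> (nat \<Rightarrow> nat) \<Rightarrow> bool" where
  "in_Par12 n \<alpha> \<beta> \<gamma> \<longleftrightarrow>
     \<alpha> permutes {..<n} \<and> \<beta> permutes {..<n} \<and> \<gamma> permutes {..<n} \<and>
     (\<exists>T. latin_square n T \<and> paratopism12_image \<alpha> \<beta> \<gamma> T = T)"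

text \<open>The cycles of a permutation of [n] (fixed points included), as orbit sets;
  the length o(C) of a cycle C is card C.\<close>

definition perm_cycles :: "nat \<Rightarrow> (nat \<Rightarrow> nat) \<Rightarrow> nat set set" where
  "perm_cycles n f = (\<lambda>x. orbit f x) ` {..<n}"

end

theory Submission
  imports Defs
begin

lemma orbit_period:
  assumes "permutation f"
  shows "0 < card (orbit f x) \<and> (\<forall>j. (f ^^ j) x = x \<longleftrightarrow> card (orbit f x) dvd j)"
proof -
  have xin: "x \<in> orbit f x" using assms by (rule permutation_self_in_orbit)
  define p where "p = funpow_dist1 f x x"
  have orb: "orbit f x = (\<lambda>n. (f ^^ n) x) ` {0..<p}"
    unfolding p_def by (rule orbit_conv_funpow_dist1[OF xin])
  have "card (orbit f x) = p"
    unfolding orb p_def by (subst card_image[OF inj_on_funpow_dist1[OF xin]]) simp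
  moreover have pp: "(f ^^ p) x = x" unfolding p_def by (rule funpow_dist1_prop[OF xin])
  moreover have "p > 0" unfolding p_def by simp
  moreover have "(f ^^ j) x = x \<longleftrightarrow> p dvd j" for j
  proof
    assume h: "(f ^^ j) x = x"
    have "(f ^^ (j mod p)) x = x" using funpow_mod_eq[where f=f and n=p and x=x and m=j] pp h by simp
    moreover have "j mod p < p" using \<open>p > 0\<close> by simp
    ultimately have "\<not> (0 < j mod p)" using funpow_dist1_least[of "j mod p" f x x] unfolding p_def by auto
    then show "p dvd j" by (simp add: dvd_eq_mod_eq_0)
  next
    assume "p dvd j"
    then show "(f ^^ j) x = x" using funpow_mod_eq[where f=f and n=p and x=x and m=j] pp by (simp add: dvd_eq_mod_eq_0)
  qed
  ultimately show ?thesis by auto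
qed

lemma orbit_eq_of_mem:
  assumes "permutation f" "y \<in> orbit f x"
  shows "orbit f y = orbit f x"
  using orbit_cyclic_eq3[OF cyclic_on_orbit'[OF assms(1)] assms(2)] .

lemma mem_orbit_iff:
  assumes "permutation f"
  shows "y \<in> orbit f x \<longleftrightarrow> (\<exists>j. y = (f ^^ j) x)"
  using orbit_altdef_permutation[OF assms] by auto

lemma period_lemma:
  assumes "finite V" "f ` V \<subseteq> V" "0 < p"
    "\<And>x. x \<in> V \<Longrightarrow> (f ^^ p) x = x"
    "\<And>x j. x \<in> V \<Longrightarrow> 0 < j \<Longrightarrow> j < p \<Longrightarrow> (f ^^ j) x \<noteq> x"
  shows "p dvd card V"
  using assms
proof (induction "card V" arbitrary: V rule: less_induct)
  case less
  show ?case
  proof (cases "V = {}")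
    case True then show ?thesis by simp
  next
    case False
    then obtain x where x: "x \<in> V" by blast
    define Ob where "Ob = (\<lambda>j. (f ^^ j) x) ` {..<p}"
    have fV: "(f ^^ j) y \<in> V" if "y \<in> V" for j y
      using that less.prems(2) by (induction j) auto
    have OV: "Ob \<subseteq> V" unfolding Ob_def using fV x by auto
    have inj: "inj_on (\<lambda>j. (f ^^ j) x) {..<p}"
    proof (rule inj_onI)
      fix i j assume ij: "i \<in> {..<p}" "j \<in> {..<p}" "(f ^^ i) x = (f ^^ j) x"
      show "i = j"
      proof (rule ccontr)
        assume "i \<noteq> j"
        then consider "i < j" | "j < i" by linarith
        then show False
        proof cases
          case 1
          have "(f ^^ (p - j + i)) x = (f ^^ (p - j)) ((f ^^ i) x)" by (simp add: funpow_add)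
          also have "\<dots> = (f ^^ (p - j)) ((f ^^ j) x)" using ij by simp
          also have "\<dots> = (f ^^ (p - j + j)) x" by (simp add: funpow_add)
          also have "\<dots> = (f ^^ p) x" using ij by simp
          also have "\<dots> = x" using less.prems(4) x by simp
          finally have "(f ^^ (p - j + i)) x = x" .
          moreover have "0 < p - j + i" "p - j + i < p" using 1 ij by auto
          ultimately show False using less.prems(5)[OF x, of "p - j + i"] by simp
        next
          case 2
          have "(f ^^ (p - i + j)) x = (f ^^ (p - i)) ((f ^^ j) x)" by (simp add: funpow_add)
          also have "\<dots> = (f ^^ (p - i)) ((f ^^ i) x)" using ij by simp
          also have "\<dots> = (f ^^ (p - i + i)) x" by (simp add: funpow_add)
          also have "\<dots> = (f ^^ p) x" using ij by simp
          also have "\<dots> = x" using less.prems(4) x by simp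
          finally have "(f ^^ (p - i + j)) x = x" .
          moreover have "0 < p - i + j" "p - i + j < p" using 2 ij by auto
          ultimately show False using less.prems(5)[OF x, of "p - i + j"] by simp
        qed
      qed
    qed
    have cO: "card Ob = p" unfolding Ob_def using card_image[OF inj] by simp
    have xO: "x \<in> Ob" unfolding Ob_def using less.prems(3) by (auto intro: image_eqI[where x=0])
    have stab: "f ` (V - Ob) \<subseteq> V - Ob"
    proof
      fix w assume "w \<in> f ` (V - Ob)"
      then obtain y where y: "y \<in> V" "y \<notin> Ob" "w = f y" by auto
      have "w \<in> V" using y less.prems(2) by auto
      moreover have "w \<notin> Ob"
      proof
        assume "w \<in> Ob"
        then obtain j where j: "j < p" "w = (f ^^ j) x" unfolding Ob_def by auto
        have "y = (f ^^ p) y" using less.prems(4) y by simp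
        also have "\<dots> = (f ^^ (p - 1)) (f y)" using less.prems(3)
          by (cases p) (simp_all add: funpow_swap1)
        also have "\<dots> = (f ^^ (p - 1)) ((f ^^ j) x)" using j y by simp
        also have "\<dots> = (f ^^ (p - 1 + j)) x" by (simp only: funpow_add comp_apply)
        also have "\<dots> = (f ^^ ((p - 1 + j) mod p)) x"
          using funpow_mod_eq[where f=f and n=p and x=x] less.prems(4) x by simp
        finally have "y \<in> Ob" unfolding Ob_def using less.prems(3) by (intro image_eqI[where x="(p - 1 + j) mod p"]) auto
        with y show False by simp
      qed
      ultimately show "w \<in> V - Ob" by simp
    qed
    have cVO: "card V = card (V - Ob) + card Ob"
      using card_Diff_subset[OF finite_subset[OF OV less.prems(1)] OV] card_mono[OF less.prems(1) OV] by simp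
    have lt: "card (V - Ob) < card V" using cVO cO less.prems(3) by simp
    have "p dvd card (V - Ob)"
    proof (rule less.hyps[OF lt])
      show "finite (V - Ob)" using less.prems(1) by simp
      show "f ` (V - Ob) \<subseteq> V - Ob" by (rule stab)
      show "0 < p" by (rule less.prems(3))
      show "(f^^p) y = y" if "y \<in> V - Ob" for y using that less.prems(4) by simp
      show "(f^^j) y \<noteq> y" if "y \<in> V - Ob" "0<j" "j<p" for y j using that less.prems(5) by simp
    qed
    then show ?thesis using cO cVO by simp
  qed
qed

lemma nt_lemma:
  fixes b c k d :: nat
  assumes "c * k = d" "0 < c" "0 < k" "0 < b" "\<forall>j. b dvd c * j \<longleftrightarrow> k dvd j"
  shows "b dvd d \<and> lcm c b = d"
proof -
  have bd: "b dvd d" using assms(5)[rule_format, of k] assms(1) by simp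
  have kb: "k dvd b" using assms(5)[rule_format, of b] by simp
  have cd: "c dvd d" using assms(1) by auto
  define L where "L = lcm c b"
  have Ld: "L dvd d" unfolding L_def using bd cd by (simp add: lcm_least)
  have cL: "c dvd L" unfolding L_def by simp
  then obtain q where q: "L = c * q" by (auto elim: dvdE)
  have "b dvd c * q" using q unfolding L_def by (metis dvd_lcm2)
  then have "k dvd q" using assms(5) by simp
  then have "c * k dvd c * q" by simp
  then have "d dvd L" using q assms(1) by simp
  with Ld have "L = d" by (simp add: dvd_antisym)
  with bd show ?thesis unfolding L_def by simp
qed

lemma per_one_iff:
  assumes "permutation f"
  shows "card (orbit f y) = 1 \<longleftrightarrow> f y = y"
proof
  assume "card (orbit f y) = 1"
  then obtain a where "orbit f y = {a}" by (auto simp: card_Suc_eq)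
  moreover have "y \<in> orbit f y" using assms by (rule permutation_self_in_orbit)
  ultimately have "orbit f y = {y}" by simp
  then show "f y = y" by (simp add: orbit_eq_singleton_iff)
next
  assume "f y = y"
  then have "orbit f y = {y}" by (simp add: orbit_eq_singleton_iff)
  then show "card (orbit f y) = 1" by simp
qed

lemma card_Rset:
  assumes bp: "\<beta> permutes {..<n}"
  shows "card {y. y < n \<and> card (orbit \<beta> y) = d} = card {C \<in> perm_cycles n \<beta>. card C = d} * d"
proof -
  have permb: "permutation \<beta>" using bp by (auto simp: permutation_permutes)
  define CC where "CC = {C \<in> perm_cycles n \<beta>. card C = d}"
  have U: "\<Union>CC = {y. y < n \<and> card (orbit \<beta> y) = d}"
  proof (intro set_eqI iffI)
    fix y assume "y \<in> \<Union>CC"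
    then obtain a where a: "a < n" "y \<in> orbit \<beta> a" "card (orbit \<beta> a) = d"
      unfolding CC_def perm_cycles_def by auto
    have "y < n" using permutes_orbit_subset[OF bp, of a] a by auto
    moreover have "orbit \<beta> y = orbit \<beta> a" using orbit_eq_of_mem[OF permb a(2)] .
    ultimately show "y \<in> {y. y < n \<and> card (orbit \<beta> y) = d}" using a by simp
  next
    fix y assume y: "y \<in> {y. y < n \<and> card (orbit \<beta> y) = d}"
    then have "orbit \<beta> y \<in> CC" unfolding CC_def perm_cycles_def by auto
    moreover have "y \<in> orbit \<beta> y" using permb by (rule permutation_self_in_orbit)
    ultimately show "y \<in> \<Union>CC" by blast
  qed
  have fin: "finite CC" unfolding CC_def perm_cycles_def by simp
  have disj: "pairwise disjnt CC"
  proof (rule pairwiseI)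
    fix A B assume AB: "A \<in> CC" "B \<in> CC" "A \<noteq> B"
    then obtain a b where "A = orbit \<beta> a" "B = orbit \<beta> b"
      unfolding CC_def perm_cycles_def by auto
    then show "disjnt A B" using AB(3) orbit_eq_of_mem[OF permb]
      unfolding disjnt_def by blast
  qed
  have finA: "\<And>A. A \<in> CC \<Longrightarrow> finite A"
  proof -
    fix A assume "A \<in> CC"
    then obtain a where "a < n" "A = orbit \<beta> a" unfolding CC_def perm_cycles_def by auto
    then show "finite A" using permutes_orbit_subset[OF bp, of a] finite_subset by blast
  qed
  have "card (\<Union>CC) = sum card CC" by (rule card_Union_disjoint[OF disj finA])
  also have "\<dots> = sum (\<lambda>_. d) CC" by (rule sum.cong) (auto simp: CC_def)
  also have "\<dots> = card CC * d" by simp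
  finally show ?thesis using U unfolding CC_def by simp
qed

lemma main_lemma:
  fixes n d c z0 :: nat and \<beta> \<gamma> :: "nat \<Rightarrow> nat" and T :: "(nat \<times> nat \<times> nat) set"
  assumes bp: "\<beta> permutes {..<n}" and gp: "\<gamma> permutes {..<n}"
    and lat: "latin_square n T"
    and clo: "\<And>x y z. (x,y,z) \<in> T \<Longrightarrow> (\<beta> y, x, \<gamma> z) \<in> T"
    and d: "d > 1"
    and r_odd: "odd (card {C \<in> perm_cycles n \<beta>. card C = d})"
    and z0: "z0 < n"
    and c_def: "c = card (orbit \<gamma> z0)"
    and c_odd: "odd c" and cd: "c dvd d"
    and ii: "\<not> (\<exists>C' \<in> perm_cycles n \<beta>. 1 < card C' \<and> card C' < d \<and> lcm c (card C') = d)"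
    and iii: "odd (card {x \<in> {..<n}. \<beta> x = x}) \<longrightarrow> c < d"
  shows "odd d \<and> (\<exists>x y. x < n \<and> y < n \<and> card (orbit \<beta> x) = d \<and> (x,y,z0) \<in> T
            \<and> x = (\<beta> ^^ (d div 2 + 1)) y)"
proof -
  have permb: "permutation \<beta>" using bp by (auto simp: permutation_permutes)
  have permg: "permutation \<gamma>" using gp by (auto simp: permutation_permutes)
  have injb: "inj \<beta>" using bp by (rule permutes_inj)
  have bn: "\<beta> x < n \<longleftrightarrow> x < n" for x using permutes_in_image[OF bp, of x] by simp
  have bjn: "(\<beta> ^^ j) x < n \<longleftrightarrow> x < n" for j x by (induction j) (auto simp: bn)
  have injbj: "inj (\<beta> ^^ j)" for j using injb by (rule inj_fn)
  note Ls = lat[unfolded latin_square_def]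
  note L1 = Ls[THEN conjunct1] and L2 = Ls[THEN conjunct2, THEN conjunct1]
    and L3 = Ls[THEN conjunct2, THEN conjunct2, THEN conjunct1]
  have Tsub: "x < n \<and> y < n \<and> z < n" if "(x,y,z) \<in> T" for x y z
    using L1 that by blast
  have Tex: "\<exists>!y. (x,y,z) \<in> T" if "x < n" "z < n" for x z
    using L3 that by blast
  have Tz: "\<exists>!z. (x,y,z) \<in> T" if "x < n" "y < n" for x y
    using L2 that by blast
  have A: "((\<beta>^^j) x, (\<beta>^^j) y, (\<gamma>^^(2*j)) z) \<in> T" if "(x,y,z) \<in> T" for x y z j
  proof (induction j)
    case 0 then show ?case using that by simp
  next
    case (Suc j) then show ?case using clo[OF clo[OF Suc.IH]] by simp
  qed
  have B: "((\<beta>^^(j+1)) y, (\<beta>^^j) x, (\<gamma>^^(2*j+1)) z) \<in> T" if "(x,y,z) \<in> T" for x y z j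
    using clo[OF A[OF that, of j]] by simp
  have cper: "0 < c \<and> (\<forall>j. (\<gamma>^^j) z0 = z0 \<longleftrightarrow> c dvd j)"
    using orbit_period[OF permg, of z0] c_def by simp
  define per where "per y = card (orbit \<beta> y)" for y
  have perb: "0 < per y \<and> (\<forall>j. (\<beta>^^j) y = y \<longleftrightarrow> per y dvd j)" for y
    using orbit_period[OF permb, of y] per_def by simp
  define k where "k = d div c"
  have dck: "d = c * k" using cd unfolding k_def by simp
  have kpos: "0 < k" using dck d by (cases k) auto
  define m where "m = c div 2"
  have cm: "c = 2 * m + 1" using c_odd unfolding m_def by presburger
  have gc: "(\<gamma>^^c) z0 = z0" using cper by simp
  define \<pi> where "\<pi> x = (THE y. (x,y,z0) \<in> T)" for x
  have piT: "(x, \<pi> x, z0) \<in> T" if "x < n" for x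
    unfolding \<pi>_def using theI'[OF Tex[OF that z0]] .
  have piU: "y = \<pi> x" if "x < n" "(x,y,z0) \<in> T" for x y
    unfolding \<pi>_def by (rule the1_equality[OF Tex[OF that(1) z0] that(2), symmetric])
  have pin: "\<pi> x < n" if "x < n" for x using Tsub[OF piT[OF that]] by simp
  define \<tau> where "\<tau> x = (\<beta>^^(m+1)) (\<pi> x)" for x
  have taun: "\<tau> x < n" if "x < n" for x unfolding \<tau>_def using pin[OF that] by (simp only: bjn)
  have pitau: "\<pi> (\<tau> x) = (\<beta>^^m) x" if "x < n" for x
  proof -
    have "((\<beta>^^(m+1)) (\<pi> x), (\<beta>^^m) x, (\<gamma>^^(2*m+1)) z0) \<in> T" by (rule B[OF piT[OF that]])
    moreover have "(\<gamma>^^(2*m+1)) z0 = z0" using gc unfolding cm .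
    ultimately have "(\<tau> x, (\<beta>^^m) x, z0) \<in> T" unfolding \<tau>_def by simp
    then show ?thesis using piU taun[OF that] by simp
  qed
  have tau2: "\<tau> (\<tau> x) = (\<beta>^^c) x" if "x < n" for x
  proof -
    have "\<tau> (\<tau> x) = (\<beta>^^(m+1)) ((\<beta>^^m) x)" unfolding \<tau>_def[of "\<tau> x"] using pitau[OF that] by simp
    also have "\<dots> = (\<beta>^^(m+1+m)) x" by (simp only: funpow_add comp_apply)
    also have "m + 1 + m = c" using cm by simp
    finally show ?thesis .
  qed
  have tauinj: "x = y" if "x < n" "y < n" "\<tau> x = \<tau> y" for x y
  proof -
    have "(\<beta>^^c) x = (\<beta>^^c) y" using tau2[OF that(1)] tau2[OF that(2)] that(3) by simp
    then show ?thesis using injbj[of c] by (simp add: inj_eq)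
  qed
  have tau_comm: "\<tau> ((\<beta>^^c) x) = (\<beta>^^c) (\<tau> x)" if "x < n" for x
  proof -
    have "\<tau> ((\<beta>^^c) x) = \<tau> (\<tau> (\<tau> x))" using tau2[OF that] by simp
    also have "\<dots> = (\<beta>^^c) (\<tau> x)" by (rule tau2[OF taun[OF that]])
    finally show ?thesis .
  qed
  have tau_commj: "\<tau> ((\<beta>^^(c*j)) x) = (\<beta>^^(c*j)) (\<tau> x)" if "x < n" for x j
  proof (induction j)
    case 0 then show ?case by simp
  next
    case (Suc j)
    have "(\<beta>^^(c * Suc j)) x = (\<beta>^^c) ((\<beta>^^(c*j)) x)" by (simp add: funpow_add)
    moreover have "(\<beta>^^(c * Suc j)) (\<tau> x) = (\<beta>^^c) ((\<beta>^^(c*j)) (\<tau> x))" by (simp add: funpow_add)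
    ultimately show ?case using tau_comm[of "(\<beta>^^(c*j)) x"] Suc.IH bjn that by simp
  qed
  have taujn: "(\<tau>^^j) x < n" if "x < n" for x j
    using that by (induction j) (auto simp: taun)
  have tau2j: "(\<tau>^^(2*j)) x = (\<beta>^^(c*j)) x" if "x < n" for x j
  proof (induction j)
    case 0 then show ?case by simp
  next
    case (Suc j)
    have "(\<tau>^^(2*Suc j)) x = \<tau> (\<tau> ((\<tau>^^(2*j)) x))" by simp
    also have "\<dots> = (\<beta>^^c) ((\<beta>^^(c*j)) x)" using tau2[OF taujn[OF that, of "2*j"]] Suc.IH by simp
    also have "\<dots> = (\<beta>^^(c * Suc j)) x" by (simp add: funpow_add)
    finally show ?case .
  qed
  define U where "U = {y. y < n \<and> (\<forall>j. (\<beta>^^(c*j)) y = y \<longleftrightarrow> k dvd j)}"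
  have tauU: "\<tau> x \<in> U" if "x \<in> U" for x
  proof -
    have xn: "x < n" using that U_def by simp
    have "(\<beta>^^(c*j)) (\<tau> x) = \<tau> x \<longleftrightarrow> (\<beta>^^(c*j)) x = x" for j
    proof
      assume "(\<beta>^^(c*j)) (\<tau> x) = \<tau> x"
      then have "\<tau> ((\<beta>^^(c*j)) x) = \<tau> x" using tau_commj[OF xn, of j] by simp
      then show "(\<beta>^^(c*j)) x = x" using tauinj[OF bjn[THEN iffD2, OF xn] xn] by simp
    next
      assume "(\<beta>^^(c*j)) x = x"
      then show "(\<beta>^^(c*j)) (\<tau> x) = \<tau> x" using tau_commj[OF xn, of j] by simp
    qed
    then show ?thesis using that taun[OF xn] unfolding U_def by simp
  qed
  have taujU: "(\<tau>^^j) x \<in> U" if "x \<in> U" for x j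
    using that by (induction j) (auto simp: tauU)
  have cpos: "0 < c" using cper by simp
  have Ufin: "finite U" unfolding U_def by (rule finite_subset[of _ "{..<n}"]) auto
  have Uchar: "y \<in> U \<longleftrightarrow> y < n \<and> (per y = d \<or> (c = d \<and> \<beta> y = y))" for y
  proof (cases "y < n")
    case False then show ?thesis unfolding U_def by simp
  next
    case True
    have e1: "(\<beta>^^(c*j)) y = y \<longleftrightarrow> per y dvd c*j" for j using perb[of y] by simp
    have "(\<forall>j. per y dvd c*j \<longleftrightarrow> k dvd j) \<longleftrightarrow> (per y = d \<or> (c = d \<and> \<beta> y = y))"
    proof
      assume H: "\<forall>j. per y dvd c*j \<longleftrightarrow> k dvd j"
      have nt: "per y dvd d \<and> lcm c (per y) = d"
        using nt_lemma[OF dck[symmetric] cpos kpos _ H] perb[of y] by simp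
      have "orbit \<beta> y \<in> perm_cycles n \<beta>" using True unfolding perm_cycles_def by simp
      then have "\<not>(1 < per y \<and> per y < d)" using ii nt unfolding per_def by auto
      moreover have "per y \<le> d" using nt d by (simp add: dvd_imp_le)
      moreover have "0 < per y" using perb[of y] by simp
      ultimately have "per y = 1 \<or> per y = d" by linarith
      then show "per y = d \<or> (c = d \<and> \<beta> y = y)"
      proof
        assume p1: "per y = 1"
        then have "\<beta> y = y" using per_one_iff[OF permb] unfolding per_def by simp
        moreover have "c = d" using nt p1 by simp
        ultimately show ?thesis by simp
      qed simp
    next
      assume "per y = d \<or> (c = d \<and> \<beta> y = y)"
      then show "\<forall>j. per y dvd c*j \<longleftrightarrow> k dvd j"
      proof
        assume "per y = d" then show ?thesis using dck cpos by simp
      next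
        assume H: "c = d \<and> \<beta> y = y"
        then have "per y = 1" using per_one_iff[OF permb] unfolding per_def by simp
        moreover have "k = 1" using H dck cpos by simp
        ultimately show ?thesis by simp
      qed
    qed
    then show ?thesis unfolding U_def using True e1 by simp
  qed
  define r where "r = card {C \<in> perm_cycles n \<beta>. card C = d}"
  define F where "F = (if c = d then {x \<in> {..<n}. \<beta> x = x} else {})"
  have Ueq: "U = {y. y < n \<and> per y = d} \<union> F" using Uchar unfolding F_def by auto
  have disj: "{y. y < n \<and> per y = d} \<inter> F = {}"
  proof -
    have "per y = 1" if "\<beta> y = y" for y using per_one_iff[OF permb] that unfolding per_def by simp
    then show ?thesis using d unfolding F_def by auto
  qed
  have cardR: "card {y. y < n \<and> per y = d} = r * d"
    using card_Rset[OF bp, of d] unfolding per_def r_def by simp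
  have cardU: "card U = r * d + card F"
    unfolding Ueq using card_Un_disjoint[OF _ _ disj] cardR unfolding F_def by simp
  show ?thesis
  proof (cases "odd d")
    case False
    have keven: "even k" using False dck c_odd by simp
    have cnd: "c \<noteq> d" using c_odd False by auto
    have period: "2*k dvd card U"
    proof (rule period_lemma[OF Ufin])
      show "\<tau> ` U \<subseteq> U" using tauU by auto
      show "0 < 2*k" using kpos by simp
      show "(\<tau>^^(2*k)) x = x" if "x \<in> U" for x using tau2j[of x k] that unfolding U_def by auto
      show "(\<tau>^^j) x \<noteq> x" if "x \<in> U" "0<j" "j<2*k" for x j
      proof
        assume fx: "(\<tau>^^j) x = x"
        have xn: "x < n" using that U_def by simp
        have xU: "\<forall>i. (\<beta>^^(c*i)) x = x \<longleftrightarrow> k dvd i" using that(1) U_def by simp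
        show False
        proof (cases "even j")
          case True
          then obtain i where i: "j = 2*i" by blast
          then have "(\<beta>^^(c*i)) x = x" using fx tau2j[OF xn, of i] by simp
          then have "k dvd i" using xU by simp
          moreover have "0 < i" "i < k" using i that by auto
          ultimately show False by (simp add: nat_dvd_not_less)
        next
          case False
          have "(\<tau>^^(j+j)) x = x" using fx by (simp add: funpow_add)
          then have "(\<tau>^^(2*j)) x = x" by (simp add: mult_2)
          then have "(\<beta>^^(c*j)) x = x" using tau2j[OF xn, of j] by simp
          then have "k dvd j" using xU by simp
          then show False using keven False by (auto elim: dvdE)
        qed
      qed
    qed
    have "card U = (r * c) * k" using cardU cnd dck unfolding F_def by simp
    then have "2*k dvd (r*c)*k" using period by simp
    then have "2 dvd r*c" using kpos by (simp add: mult.commute[of _ k])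
    then show ?thesis using r_odd c_odd unfolding r_def by simp
  next
    case True
    have kodd: "odd k" using True dck by simp
    have "\<exists>x\<in>U. (\<tau>^^k) x = x"
    proof (rule ccontr)
      assume H: "\<not> (\<exists>x\<in>U. (\<tau>^^k) x = x)"
      have "2 dvd card U"
      proof (rule period_lemma[OF Ufin, where f="\<tau>^^k"])
        show "(\<tau>^^k) ` U \<subseteq> U" using taujU by auto
        show "(0::nat) < 2" by simp
        show "((\<tau>^^k)^^2) x = x" if "x\<in>U" for x
        proof -
          have xn: "x < n" using that U_def by simp
          have "((\<tau>^^k)^^2) x = (\<tau>^^(2*k)) x" by (simp add: funpow_mult mult.commute)
          also have "\<dots> = (\<beta>^^(c*k)) x" by (rule tau2j[OF xn])
          also have "\<dots> = x" using that unfolding U_def by simp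
          finally show ?thesis .
        qed
        show "((\<tau>^^k)^^j) x \<noteq> x" if "x\<in>U" "0<j" "j<2" for x j
        proof -
          have "j = 1" using that by simp
          then show ?thesis using H that(1) by auto
        qed
      qed
      moreover have "odd (card U)"
      proof -
        have "odd (r*d)" using r_odd True unfolding r_def by simp
        moreover have "even (card F)" using iii unfolding F_def by auto
        ultimately show ?thesis using cardU by simp
      qed
      ultimately show False by simp
    qed
    then obtain x where xU: "x \<in> U" and fx: "(\<tau>^^k) x = x" by blast
    have xn: "x < n" using xU U_def by simp
    define l where "l = k div 2"
    have kl: "k = 2*l+1" using kodd unfolding l_def by presburger
    have d2: "d = 2*(c*l+m) + 1" using dck kl cm by (simp add: algebra_simps)
    have h: "d div 2 = c*l + m" using d2 by simp
    have piB: "\<pi> ((\<beta>^^(c*l)) x) = (\<beta>^^(c*l)) (\<pi> x)"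
    proof -
      have "((\<beta>^^(c*l)) x, (\<beta>^^(c*l)) (\<pi> x), (\<gamma>^^(2*(c*l))) z0) \<in> T"
        by (rule A[OF piT[OF xn]])
      moreover have "(\<gamma>^^(2*(c*l))) z0 = z0" using cper by simp
      ultimately have "((\<beta>^^(c*l)) x, (\<beta>^^(c*l)) (\<pi> x), z0) \<in> T" by simp
      then show ?thesis using piU bjn xn by simp
    qed
    have "x = (\<tau>^^k) x" using fx by simp
    also have "\<dots> = \<tau> ((\<tau>^^(2*l)) x)" using kl by simp
    also have "\<dots> = \<tau> ((\<beta>^^(c*l)) x)" using tau2j[OF xn] by simp
    also have "\<dots> = (\<beta>^^(m+1)) ((\<beta>^^(c*l)) (\<pi> x))" unfolding \<tau>_def using piB by simp
    also have "\<dots> = (\<beta>^^(m+1+c*l)) (\<pi> x)" by (simp only: funpow_add comp_apply)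
    also have "m+1+c*l = d div 2 + 1" using h by simp
    finally have xd: "x = (\<beta>^^(d div 2 + 1)) (\<pi> x)" .
    have "per x = d"
    proof (rule ccontr)
      assume "per x \<noteq> d"
      then have cdd: "c = d" and bx: "\<beta> x = x" using Uchar xU by auto
      have bjx: "(\<beta>^^j) x = x" for j using bx by (induction j) auto
      have "(\<beta>^^(d div 2 + 1)) (\<pi> x) = (\<beta>^^(d div 2 + 1)) x"
        using xd bjx[of "d div 2 + 1"] by (simp del: funpow.simps)
      then have "\<pi> x = x" using injbj[of "d div 2 + 1"] by (meson injD)
      then have T1: "(x, x, z0) \<in> T" using piT[OF xn] by simp
      have T2: "(x, x, \<gamma> z0) \<in> T" using clo[OF T1] bx by simp
      have "(THE z. (x,x,z) \<in> T) = z0" by (rule the1_equality[OF Tz[OF xn xn] T1])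
      moreover have "(THE z. (x,x,z) \<in> T) = \<gamma> z0" by (rule the1_equality[OF Tz[OF xn xn] T2])
      ultimately have "\<gamma> z0 = z0" by simp
      then have "orbit \<gamma> z0 = {z0}" by (simp add: orbit_eq_singleton_iff)
      then have "c = 1" using c_def by simp
      then show False using cdd d by simp
    qed
    then show ?thesis using True xn pin[OF xn] piT[OF xn] xd unfolding per_def by auto
  qed
qed

theorem theorem4p5:
  fixes n d :: nat and \<beta> \<gamma> :: "nat \<Rightarrow> nat"
  assumes par: "in_Par12 n id \<beta> \<gamma>"
    and d: "d > 1"
    and r_odd: "odd (card {C \<in> perm_cycles n \<beta>. card C = d})"
  shows "let r = card {C \<in> perm_cycles n \<beta>. card C = d};
             \<Gamma> = {C \<in> perm_cycles n \<gamma>.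
                    odd (card C) \<and> card C dvd d \<and>
                    \<not> (\<exists>C' \<in> perm_cycles n \<beta>. 1 < card C' \<and> card C' < d \<and> lcm (card C) (card C') = d) \<and>
                    (odd (card {x \<in> {..<n}. \<beta> x = x}) \<longrightarrow> card C < d)}
         in (even d \<longrightarrow> \<Gamma> = {}) \<and> (odd d \<longrightarrow> card \<Gamma> \<le> r)"
proof -
  have bp: "\<beta> permutes {..<n}" and gp: "\<gamma> permutes {..<n}"
    and ex: "\<exists>T. latin_square n T \<and> paratopism12_image id \<beta> \<gamma> T = T"
    using par unfolding in_Par12_def by auto
  then obtain T where lat: "latin_square n T" and img: "paratopism12_image id \<beta> \<gamma> T = T" by blast
  have clo: "(\<beta> y, x, \<gamma> z) \<in> T" if "(x,y,z) \<in> T" for x y z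
  proof -
    have "(\<beta> y, id x, \<gamma> z) \<in> paratopism12_image id \<beta> \<gamma> T"
      unfolding paratopism12_image_def using that by blast
    then show ?thesis using img by simp
  qed
  have permb: "permutation \<beta>" using bp by (auto simp: permutation_permutes)
  have permg: "permutation \<gamma>" using gp by (auto simp: permutation_permutes)
  have injb: "inj \<beta>" using bp by (rule permutes_inj)
  have injbj: "inj (\<beta> ^^ j)" for j using injb by (rule inj_fn)
  note Ls = lat[unfolded latin_square_def]
  note L1 = Ls[THEN conjunct1] and L2 = Ls[THEN conjunct2, THEN conjunct1]
  have A: "((\<beta>^^j) x, (\<beta>^^j) y, (\<gamma>^^(2*j)) z) \<in> T" if "(x,y,z) \<in> T" for x y z j
  proof (induction j)
    case 0 then show ?case using that by simp
  next
    case (Suc j) then show ?case using clo[OF clo[OF Suc.IH]] by simp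
  qed
  define r where "r = card {C \<in> perm_cycles n \<beta>. card C = d}"
  define \<Gamma> where "\<Gamma> = {C \<in> perm_cycles n \<gamma>.
                    odd (card C) \<and> card C dvd d \<and>
                    \<not> (\<exists>C' \<in> perm_cycles n \<beta>. 1 < card C' \<and> card C' < d \<and> lcm (card C) (card C') = d) \<and>
                    (odd (card {x \<in> {..<n}. \<beta> x = x}) \<longrightarrow> card C < d)}"
  have key: "\<exists>w<n. C = orbit \<gamma> w \<and> odd d \<and> (\<exists>x y. x < n \<and> y < n \<and> card (orbit \<beta> x) = d \<and> (x,y,w) \<in> T
            \<and> x = (\<beta> ^^ (d div 2 + 1)) y)" if CG: "C \<in> \<Gamma>" for C
  proof -
    obtain w where w: "w < n" "C = orbit \<gamma> w" using CG unfolding \<Gamma>_def perm_cycles_def by auto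
    have "odd d \<and> (\<exists>x y. x < n \<and> y < n \<and> card (orbit \<beta> x) = d \<and> (x,y,w) \<in> T
            \<and> x = (\<beta> ^^ (d div 2 + 1)) y)"
      apply (rule main_lemma[OF bp gp lat clo d r_odd w(1) refl])
      using CG w unfolding \<Gamma>_def by auto
    then show ?thesis using w by blast
  qed
  have ev: "even d \<longrightarrow> \<Gamma> = {}" using key by blast
  have od: "card \<Gamma> \<le> r" if "odd d"
  proof -
    define h where "h = d div 2 + 1"
    define DD where "DD = {C \<in> perm_cycles n \<beta>. card C = d}"
    define P where "P C D \<longleftrightarrow> D \<in> DD \<and> (\<exists>x y z. x \<in> D \<and> z \<in> C \<and> (x,y,z) \<in> T \<and> x = (\<beta>^^h) y)"
      for C D
    define g where "g C = (SOME D. P C D)" for C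
    have gP: "P C (g C)" if CG: "C \<in> \<Gamma>" for C
    proof -
      obtain w x y where w: "w < n" "C = orbit \<gamma> w" and xy: "x < n" "y < n" "card (orbit \<beta> x) = d"
        "(x,y,w) \<in> T" "x = (\<beta> ^^ h) y" using key[OF CG] unfolding h_def by blast
      have "P C (orbit \<beta> x)"
        unfolding P_def DD_def perm_cycles_def
        using xy w permutation_self_in_orbit[OF permb, of x] permutation_self_in_orbit[OF permg, of w]
        by blast
      then show ?thesis unfolding g_def by (rule someI)
    qed
    have inj: "inj_on g \<Gamma>"
    proof (rule inj_onI)
      fix C1 C2 assume C: "C1 \<in> \<Gamma>" "C2 \<in> \<Gamma>" "g C1 = g C2"
      define D where "D = g C1"
      obtain x1 y1 z1 where 1: "x1 \<in> D" "z1 \<in> C1" "(x1,y1,z1) \<in> T" "x1 = (\<beta>^^h) y1" and DD: "D \<in> DD"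
        using gP[OF C(1)] unfolding P_def D_def by blast
      obtain x2 y2 z2 where 2: "x2 \<in> D" "z2 \<in> C2" "(x2,y2,z2) \<in> T" "x2 = (\<beta>^^h) y2"
        using gP[OF C(2)] C(3) unfolding P_def D_def by auto
      obtain a where a: "D = orbit \<beta> a" using DD unfolding DD_def perm_cycles_def by auto
      have "orbit \<beta> x1 = D" "orbit \<beta> x2 = D" using a 1(1) 2(1) orbit_eq_of_mem[OF permb] by auto
      then have "x2 \<in> orbit \<beta> x1" using permutation_self_in_orbit[OF permb, of x2] by simp
      then obtain i where i: "x2 = (\<beta>^^i) x1" using mem_orbit_iff[OF permb] by blast
      have T3: "((\<beta>^^i) x1, (\<beta>^^i) y1, (\<gamma>^^(2*i)) z1) \<in> T" by (rule A[OF 1(3)])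
      have "(\<beta>^^h) ((\<beta>^^i) y1) = (\<beta>^^(h+i)) y1" by (simp only: funpow_add comp_apply)
      also have "\<dots> = (\<beta>^^(i+h)) y1" by (simp add: add.commute)
      also have "\<dots> = (\<beta>^^i) x1" using 1(4) by (simp only: funpow_add comp_apply)
      finally have "(\<beta>^^h) ((\<beta>^^i) y1) = (\<beta>^^h) y2" using i 2(4) by simp
      then have y2: "y2 = (\<beta>^^i) y1" using injbj[of h] by (metis injD)
      have T4: "(x2, y2, (\<gamma>^^(2*i)) z1) \<in> T" using T3 i y2 by simp
      have x2n: "x2 < n" and y2n: "y2 < n" using L1 2(3) by auto
      have "(THE z. (x2,y2,z) \<in> T) = z2" by (rule the1_equality[OF L2[rule_format, OF x2n y2n] 2(3)])
      moreover have "(THE z. (x2,y2,z) \<in> T) = (\<gamma>^^(2*i)) z1"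
        by (rule the1_equality[OF L2[rule_format, OF x2n y2n] T4])
      ultimately have z2: "z2 = (\<gamma>^^(2*i)) z1" by simp
      then have z2o: "z2 \<in> orbit \<gamma> z1" using mem_orbit_iff[OF permg] by blast
      obtain w1 where w1: "C1 = orbit \<gamma> w1" using C(1) unfolding \<Gamma>_def perm_cycles_def by auto
      obtain w2 where w2: "C2 = orbit \<gamma> w2" using C(2) unfolding \<Gamma>_def perm_cycles_def by auto
      have "orbit \<gamma> z1 = C1" using w1 1(2) orbit_eq_of_mem[OF permg] by simp
      moreover have "orbit \<gamma> z2 = C2" using w2 2(2) orbit_eq_of_mem[OF permg] by simp
      moreover have "orbit \<gamma> z2 = orbit \<gamma> z1" using orbit_eq_of_mem[OF permg z2o] .
      ultimately show "C1 = C2" by simp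
    qed
    have "g ` \<Gamma> \<subseteq> DD" using gP unfolding P_def by auto
    moreover have "finite DD" unfolding DD_def perm_cycles_def by simp
    ultimately have "card \<Gamma> \<le> card DD" using card_inj_on_le[OF inj] by blast
    then show ?thesis unfolding DD_def r_def .
  qed
  show ?thesis using ev od unfolding Let_def \<Gamma>_def r_def by simp
qed

end
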